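(* Let $\mathbb{K}$ be a field and $f_1,\dots,f_t\in\mathbb{K}[x,y]$ ($t\ge2$) polynomials of $y$-degree at most $d_y\ge1$, such that the coefficient of $y^{d_y}$ in $f_t$ equals $1$. Let $I=\langle f_1,\dots,f_t\rangle$. Then every $f\in I$ with $\deg_y(f)<2d_y$ can be written as $f=w_1f_1+\cdots+w_tf_t$ with all $w_i\in\mathbb{K}[x,y]$ of $y$-degree less than $d_y$. *)

theory Defs
  imports "HOL-Computational_Algebra.Polynomial"
begin

text \<open>Bivariate polynomials K[x,y] are represented as K[x][y], i.e. the type
  'a poly poly: a polynomial in y whose coefficients are polynomials in x.
  Then the y-degree is degree, and the coefficient of y^k is coeff _ k.\<close>

definition in_ideal_gen :: "nat \<Rightarrow> (nat \<Rightarrow> 'a::comm_ring_1) \<Rightarrow> 'a \<Rightarrow> bool" where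
  "in_ideal_gen t fs g \<longleftrightarrow> (\<exists>c. g = (\<Sum>i=1..t. c i * fs i))"

end

theory Submission
  imports Defs
begin

lemma monic_div:
  fixes g :: "'a::comm_ring_1 poly"
  assumes "g \<noteq> 0" "coeff g (degree g) = 1"
  shows "\<exists>q r. c = g * q + r \<and> (r = 0 \<or> degree r < degree g)"
proof -
  obtain q r where qr: "pseudo_divmod c g = (q, r)" by (cases "pseudo_divmod c g") auto
  from pseudo_divmod[OF assms(1) qr] assms(2) show ?thesis by auto
qed

theorem mainTheorem5:
  fixes fs :: "nat \<Rightarrow> 'a::field poly poly"
    and t dy :: nat
    and f :: "'a poly poly"
  assumes "t \<ge> 2" and "dy \<ge> 1"
    and "\<forall>i\<in>{1..t}. degree (fs i) \<le> dy"
    and "coeff (fs t) dy = 1"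
    and "in_ideal_gen t fs f"
    and "degree f < 2 * dy"
  shows "\<exists>w. f = (\<Sum>i=1..t. w i * fs i) \<and> (\<forall>i\<in>{1..t}. degree (w i) < dy)"
proof -
  define g where "g = fs t"
  have gne: "g \<noteq> 0" using assms(4) g_def by auto
  have dg: "degree g = dy"
    proof (rule antisym)
    show "degree g \<le> dy" using assms(3,1) g_def by auto
    show "dy \<le> degree g" using assms(4) g_def by (intro le_degree) simp
  qed
  have lc: "coeff g (degree g) = 1" using dg assms(4) g_def by simp
  obtain c where c: "f = (\<Sum>i=1..t. c i * fs i)" using assms(5) unfolding in_ideal_gen_def by auto
  have "\<forall>i. \<exists>q r. c i = g * q + r \<and> (r = 0 \<or> degree r < degree g)"
    using monic_div[OF gne lc] by blast
  then obtain q r where qr: "\<And>i. c i = g * q i + r i" "\<And>i. r i = 0 \<or> degree (r i) < dy"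
    using dg by metis
  define W where "W = c t + (\<Sum>i=1..<t. q i * fs i)"
  define R where "R = (\<Sum>i=1..<t. r i * fs i)"
  have split: "{1..t} = insert t {1..<t}" using assms(1) by auto
  have "f = (\<Sum>i=1..<t. c i * fs i) + c t * g"
    unfolding c split g_def by (simp add: add.commute)
  also have "(\<Sum>i=1..<t. c i * fs i) = (\<Sum>i=1..<t. (q i * fs i) * g + r i * fs i)"
    by (rule sum.cong) (auto simp: qr(1) algebra_simps)
  finally have f2: "f = R + W * g"
    unfolding R_def W_def by (simp add: sum.distrib sum_distrib_left sum_distrib_right algebra_simps)
  have dR: "degree R \<le> 2 * dy - 1"
    unfolding R_def
  proof (rule degree_sum_le)
    fix i assume i: "i \<in> {1..<t}"
    show "degree (r i * fs i) \<le> 2 * dy - 1"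
    proof (cases "r i = 0")
      case True then show ?thesis by simp
    next
      case False
      then have "degree (r i) < dy" using qr(2) by auto
      moreover have "degree (fs i) \<le> dy" using assms(3) i by auto
      ultimately show ?thesis using degree_mult_le[of "r i" "fs i"] by linarith
    qed
  qed simp
  have "degree (W * g) \<le> 2 * dy - 1"
  proof -
    have "W * g = f - R" using f2 by simp
    moreover have "degree f \<le> 2 * dy - 1" using assms(6) by linarith
    ultimately show ?thesis using dR degree_diff_le by metis
  qed
  hence dW: "W = 0 \<or> degree W < dy"
    using degree_mult_eq[of W g] gne dg assms(2) by (cases "W = 0") auto
  define w where "w i = (if i = t then W else r i)" for i
  have "(\<Sum>i=1..t. w i * fs i) = R + W * g"
    unfolding split w_def R_def g_def by (simp add: add.commute)
  moreover have "\<forall>i\<in>{1..t}. degree (w i) < dy"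
    using dW qr(2) assms(2) unfolding w_def by (metis degree_0 gr0I less_one linorder_not_le)
  ultimately show ?thesis using f2 by metis
qed

end
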